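(* Consider Problem 2 (defined in the context) with $k_1>k_2$ and $\bar P\ge F k_2$. Let $M=\left\lfloor\frac{\bar P-Fk_2}{k_1-k_2}\right\rfloor$. (i) If $B_3>B_2$, an optimal solution is $$X_1=\min\left\{\left\lfloor\tfrac{C}{I^S}\right\rfloor,\ F,\ M\right\},\quad X_2=\max\left\{0,\ \min\{F,M\}-X_1\right\},\quad X_3=F-X_1-X_2,$$ and the optimal value is $B^*=B_2X_2+B_3X_3$. (ii) If $B_3\le B_2$, an optimal solution is $$X_1=\min\left\{\left\lfloor\tfrac{C}{I^S}\right\rfloor,\ F,\ M\right\},\quad X_2=0,\quad X_3=F-X_1,$$ and the optimal value is $B^*=B_3X_3$.
   Context: Problem 2: Given a positive integer $F$ (number of equally popular tasks), reals $I^S>0$ (remote input data size per task), $C\ge 0$ (cache size), $\bar P$ (average power budget), $k_1>0$ and $k_2>0$ (average power consumed per task by local computing and by uplink transmission for MEC computing, respectively), $B_1=0$, and $B_2,B_3>0$ (the minimum bandwidths per task for route 2 "local computing without local caching" and route 3 "MEC computing"; route 1 is "local computing with local caching"), minimize $X_1B_1+X_2B_2+X_3B_3$ over nonnegative integers $X_1,X_2,X_3$ (numbers of tasks served via routes 1, 2, 3) subject to $I^SX_1\le C$, $k_1(X_1+X_2)+k_2X_3\le\bar P$, and $X_1+X_2+X_3=F$. $\lfloor\cdot\rfloor$ denotes the floor function. *)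

theory Defs
  imports Complex_Main
begin

definition feasible2 ::
  "nat \<Rightarrow> real \<Rightarrow> real \<Rightarrow> real \<Rightarrow> real \<Rightarrow> real \<Rightarrow> nat \<Rightarrow> nat \<Rightarrow> nat \<Rightarrow> bool" where
  "feasible2 F IS C Pbar k1 k2 X1 X2 X3 \<longleftrightarrow>
     IS * real X1 \<le> C \<and>
     k1 * real (X1 + X2) + k2 * real X3 \<le> Pbar \<and>
     X1 + X2 + X3 = F"

definition cost2 :: "real \<Rightarrow> real \<Rightarrow> real \<Rightarrow> nat \<Rightarrow> nat \<Rightarrow> nat \<Rightarrow> real" where
  "cost2 B1 B2 B3 X1 X2 X3 = real X1 * B1 + real X2 * B2 + real X3 * B3"

definition optimal2 ::
  "nat \<Rightarrow> real \<Rightarrow> real \<Rightarrow> real \<Rightarrow> real \<Rightarrow> real \<Rightarrow> real \<Rightarrow> real \<Rightarrow> real \<Rightarrow> nat \<Rightarrow> nat \<Rightarrow> nat \<Rightarrow> bool" where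
  "optimal2 F IS C Pbar k1 k2 B1 B2 B3 X1 X2 X3 \<longleftrightarrow>
     feasible2 F IS C Pbar k1 k2 X1 X2 X3 \<and>
     (\<forall>Y1 Y2 Y3. feasible2 F IS C Pbar k1 k2 Y1 Y2 Y3 \<longrightarrow>
        cost2 B1 B2 B3 X1 X2 X3 \<le> cost2 B1 B2 B3 Y1 Y2 Y3)"

end

theory Submission
  imports Defs
begin

lemma le_nat_floor_iff: "(real y \<le> x) \<longleftrightarrow> y \<le> nat \<lfloor>x\<rfloor>" if "x \<ge> 0" for x :: real
  using that by (simp add: le_nat_iff le_floor_iff)

lemma feas_iff:
  fixes IS C Pbar k1 k2 :: real
  assumes "IS > 0" "C \<ge> 0" "k1 > k2" "Pbar \<ge> real F * k2"
  shows "feasible2 F IS C Pbar k1 k2 Y1 Y2 Y3 \<longleftrightarrow>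
     Y1 \<le> nat \<lfloor>C / IS\<rfloor> \<and> Y1 + Y2 \<le> nat \<lfloor>(Pbar - real F * k2) / (k1 - k2)\<rfloor> \<and> Y1 + Y2 + Y3 = F"
proof -
  have a: "IS * real Y1 \<le> C \<longleftrightarrow> Y1 \<le> nat \<lfloor>C / IS\<rfloor>"
    using assms le_nat_floor_iff[of "C/IS" Y1] by (simp add: pos_le_divide_eq mult.commute)
  have b: "k1 * real (Y1 + Y2) + k2 * real Y3 \<le> Pbar \<longleftrightarrow> Y1 + Y2 \<le> nat \<lfloor>(Pbar - real F * k2) / (k1 - k2)\<rfloor>"
    if "Y1 + Y2 + Y3 = F"
  proof -
    have "real Y3 = real F - real (Y1 + Y2)" using that by simp
    hence "k1 * real (Y1 + Y2) + k2 * real Y3 \<le> Pbar \<longleftrightarrow> real (Y1+Y2) * (k1 - k2) \<le> Pbar - real F * k2"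
    proof -
      have "real F = real Y1 + real Y2 + real Y3" using that by simp
      thus ?thesis by (simp add: algebra_simps)
    qed
    also have "\<dots> \<longleftrightarrow> real (Y1+Y2) \<le> (Pbar - real F * k2) / (k1 - k2)"
      using assms by (simp add: pos_le_divide_eq)
    also have "\<dots> \<longleftrightarrow> Y1 + Y2 \<le> nat \<lfloor>(Pbar - real F * k2) / (k1 - k2)\<rfloor>"
      using assms by (intro le_nat_floor_iff) simp
    finally show ?thesis .
  qed
  show ?thesis unfolding feasible2_def using a b by blast
qed

theorem theorem1:
  fixes F :: nat and IS C Pbar k1 k2 B1 B2 B3 :: real
  assumes "F > 0" and "IS > 0" and "C \<ge> 0" and "k1 > 0" and "k2 > 0"
    and "B1 = 0" and "B2 > 0" and "B3 > 0"
    and "k1 > k2" and "Pbar \<ge> real F * k2"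
  defines "M \<equiv> nat \<lfloor>(Pbar - real F * k2) / (k1 - k2)\<rfloor>"
  defines "X1 \<equiv> min (nat \<lfloor>C / IS\<rfloor>) (min F M)"
  shows "(B3 > B2 \<longrightarrow>
           (let X2 = max 0 (min F M - X1); X3 = F - X1 - X2 in
              optimal2 F IS C Pbar k1 k2 B1 B2 B3 X1 X2 X3 \<and>
              cost2 B1 B2 B3 X1 X2 X3 = B2 * real X2 + B3 * real X3)) \<and>
         (B3 \<le> B2 \<longrightarrow>
           (let X2 = 0; X3 = F - X1 in
              optimal2 F IS C Pbar k1 k2 B1 B2 B3 X1 X2 X3 \<and>
              cost2 B1 B2 B3 X1 X2 X3 = B3 * real X3))"
proof -
  note fi = feas_iff[OF assms(2,3,9,10), folded M_def]
  let ?c = "nat \<lfloor>C / IS\<rfloor>"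
  show ?thesis
  proof (intro conjI impI)
    assume h: "B2 < B3"
    define X2 where "X2 = min F M - X1"
    have cX: "cost2 B1 B2 B3 X1 X2 (F - X1 - X2) = real F * B3 - (B3 - B2) * real (X1 + X2) - B2 * real X1"
      unfolding cost2_def X2_def X1_def using assms(6) by (simp add: of_nat_diff algebra_simps)
    have "optimal2 F IS C Pbar k1 k2 B1 B2 B3 X1 X2 (F - X1 - X2)"
      unfolding optimal2_def
    proof (intro conjI allI impI)
      show "feasible2 F IS C Pbar k1 k2 X1 X2 (F - X1 - X2)"
        unfolding fi X2_def X1_def by auto
      fix Y1 Y2 Y3 assume "feasible2 F IS C Pbar k1 k2 Y1 Y2 Y3"
      hence y: "Y1 \<le> ?c" "Y1 + Y2 \<le> M" "Y1 + Y2 + Y3 = F" unfolding fi by auto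
      have cY: "cost2 B1 B2 B3 Y1 Y2 Y3 = real F * B3 - (B3 - B2) * real (Y1 + Y2) - B2 * real Y1"
        unfolding cost2_def using assms(6) y(3) by (auto simp: algebra_simps)
      have s: "Y1 + Y2 \<le> X1 + X2" "Y1 \<le> X1" using y unfolding X2_def X1_def by auto
      have "(B3 - B2) * real (Y1 + Y2) \<le> (B3 - B2) * real (X1 + X2)"
        using s h by (intro mult_left_mono) auto
      moreover have "B2 * real Y1 \<le> B2 * real X1" using s assms(7) by simp
      ultimately show "cost2 B1 B2 B3 X1 X2 (F - X1 - X2) \<le> cost2 B1 B2 B3 Y1 Y2 Y3"
        unfolding cX cY by linarith
    qed
    moreover have "cost2 B1 B2 B3 X1 X2 (F - X1 - X2) = B2 * real X2 + B3 * real (F - X1 - X2)"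
      unfolding cost2_def using assms(6) by simp
    ultimately show "let X2 = max 0 (min F M - X1); X3 = F - X1 - X2 in
              optimal2 F IS C Pbar k1 k2 B1 B2 B3 X1 X2 X3 \<and>
              cost2 B1 B2 B3 X1 X2 X3 = B2 * real X2 + B3 * real X3"
      unfolding X2_def by simp
  next
    assume h: "B3 \<le> B2"
    have "optimal2 F IS C Pbar k1 k2 B1 B2 B3 X1 0 (F - X1)"
      unfolding optimal2_def
    proof (intro conjI allI impI)
      show "feasible2 F IS C Pbar k1 k2 X1 0 (F - X1)"
        unfolding fi X1_def by auto
      fix Y1 Y2 Y3 assume "feasible2 F IS C Pbar k1 k2 Y1 Y2 Y3"
      hence y: "Y1 \<le> ?c" "Y1 + Y2 \<le> M" "Y1 + Y2 + Y3 = F" unfolding fi by auto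
      have s: "Y1 \<le> X1" using y unfolding X1_def by auto
      have "cost2 B1 B2 B3 X1 0 (F - X1) = B3 * (real F - real X1)"
        unfolding cost2_def X1_def using assms(6) by (simp add: of_nat_diff algebra_simps)
      also have "\<dots> \<le> B3 * (real F - real Y1)" using s assms(8) by (intro mult_left_mono) auto
      also have "\<dots> = B3 * real Y2 + B3 * real Y3" using y(3) by (auto simp: algebra_simps)
      also have "\<dots> \<le> cost2 B1 B2 B3 Y1 Y2 Y3"
        unfolding cost2_def using assms(6) h by (simp add: mult_right_mono mult.commute)
      finally show "cost2 B1 B2 B3 X1 0 (F - X1) \<le> cost2 B1 B2 B3 Y1 Y2 Y3" .
    qed
    moreover have "cost2 B1 B2 B3 X1 0 (F - X1) = B3 * real (F - X1)"
      unfolding cost2_def using assms(6) by simp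
    ultimately show "let X2 = 0; X3 = F - X1 in
              optimal2 F IS C Pbar k1 k2 B1 B2 B3 X1 X2 X3 \<and>
              cost2 B1 B2 B3 X1 X2 X3 = B3 * real X3" by simp
  qed
qed

end
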